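(* Let $n\ge 3$ be odd and let $C,\widetilde C$ be self-dual codes in $\mathbb{F}_2^{n+1}$. Then there exists an orthogonal matrix $P\in\mathcal{O}_n(\mathbb{F}_2)$ such that $\widetilde C=(P\oplus 1)C$ and, moreover, for every basis $\mathcal{B}=\{\mathbf{y}_1,\ldots,\mathbf{y}_m\}\in\mathfrak{B}_C$, the set $\widetilde{\mathcal{B}}=\{(P\oplus1)\mathbf{y}_1,\ldots,(P\oplus1)\mathbf{y}_m\}$ lies in $\mathfrak{B}_{\widetilde C}$ and: (i) $\mathcal{B}\in\mathfrak{B}_C^2$ iff $\widetilde{\mathcal{B}}\in\mathfrak{B}_{\widetilde C}^2$; (ii) if $A'_{\mathcal{B}}\in\mathcal{F}_C$ then $PA'_{\mathcal{B}}P^{\top}=A'_{\widetilde{\mathcal{B}}}\in\mathcal{F}_{\widetilde C}$; (iii) if $A''_{\mathcal{B}}\in\mathcal{F}_C$ then $PA''_{\mathcal{B}}P^{\top}=A''_{\widetilde{\mathcal{B}}}\in\mathcal{F}_{\widetilde C}$; (iv) $\{PAP^{\top}:A\in\mathcal{F}_C\}=\mathcal{F}_{\widetilde C}$.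
   Context: $\mathbb{F}_2$ is the binary field. $\mathcal{O}_n(\mathbb{F}_2)$ is the group of $P\in GL_n(\mathbb{F}_2)$ with $P^{\top}=P^{-1}$; $P\oplus 1$ is the $(n+1)\times(n+1)$ block-diagonal matrix with blocks $P$ and $1$, and $(P\oplus1)C=\{(P\oplus1)\mathbf{y}:\mathbf{y}\in C\}$. A code $C\subseteq\mathbb{F}_2^{n+1}$ is self-dual if $C=C^\perp$ (standard dot product); then $\dim C=m:=\frac{n+1}{2}$. For $\mathbf{y}\in\mathbb{F}_2^{n+1}$, $\underline{\mathbf{y}}\in\mathbb{F}_2^n$ is $\mathbf{y}$ with its last entry deleted; $\mathbf{x}^2:=\mathbf{x}\mathbf{x}^{\top}$. $\mathfrak{B}_C$ is the set of bases of $C$, $\mathfrak{B}_C^2$ those bases containing an even number of vectors with last entry $1$. For $\mathcal{B}=\{\mathbf{y}_1,\ldots,\mathbf{y}_m\}\in\mathfrak{B}_C$, $A'_{\mathcal{B}}=I_n+\sum_{i=1}^m\underline{\mathbf{y}_i}^2$ and $A''_{\mathcal{B}}=I_n+\sum_{i=1}^m\underline{\mathbf{y}_i}^2+(\underline{\mathbf{y}_1}+\cdots+\underline{\mathbf{y}_m})^2$. $\mathcal{F}_C=\{A'_{\mathcal{B}}:\mathcal{B}\in\mathfrak{B}_C^2\}\cup\{A''_{\mathcal{B}}:\mathcal{B}\in\mathfrak{B}_C\}$ if $m$ is even, and $\mathcal{F}_C=\{A'_{\mathcal{B}}:\mathcal{B}\in\mathfrak{B}_C^2\}$ if $m$ is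 odd. *)

theory Defs
  imports "HOL-Analysis.Analysis" "HOL-Library.Z2"
begin

text \<open>Vectors in F_2^(n+1) are modelled as bit^('n option); the coordinate None is the
  distinguished last coordinate, Some i (i :: 'n) are the first n coordinates.
  n = CARD('n).\<close>

definition dotp :: "bit ^ 'k::finite \<Rightarrow> bit ^ 'k::finite \<Rightarrow> bit" where
  "dotp x y = (\<Sum>i\<in>UNIV. x $ i * y $ i)"

definition dual_code :: "(bit ^ 'k::finite) set \<Rightarrow> (bit ^ 'k) set" where
  "dual_code C = {x. \<forall>y\<in>C. dotp x y = 0}"

definition self_dual :: "(bit ^ 'k::finite) set \<Rightarrow> bool" where
  "self_dual C \<longleftrightarrow> C = dual_code C"

text \<open>underline y: delete the last entry\<close>
definition trunc :: "bit ^ ('n::finite option) \<Rightarrow> bit ^ 'n" where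
  "trunc y = (\<chi> i. y $ Some i)"

text \<open>x^2 := x x^T for a column vector x (an n x n matrix)\<close>
definition sqv :: "bit ^ 'n::finite \<Rightarrow> bit ^ 'n ^ 'n" where
  "sqv x = (\<chi> i j. x $ i * x $ j)"

text \<open>P \<oplus> 1\<close>
definition ext1 :: "bit ^ 'n ^ 'n \<Rightarrow> bit ^ ('n::finite option) ^ ('n option)" where
  "ext1 P = (\<chi> i j. case (i, j) of (Some a, Some b) \<Rightarrow> P $ a $ b
                                  | (None, None) \<Rightarrow> 1
                                  | _ \<Rightarrow> 0)"

text \<open>the set of bases of C\<close>
definition bases :: "(bit ^ 'k::finite) set \<Rightarrow> (bit ^ 'k) set set" where
  "bases C = {B. B \<subseteq> C \<and> vec.independent B \<and> vec.span B = C}"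

text \<open>bases with an even number of vectors whose last entry is 1\<close>
definition bases2 :: "(bit ^ ('n::finite option)) set \<Rightarrow> (bit ^ ('n::finite option)) set set" where
  "bases2 C = {B \<in> bases C. even (card {y \<in> B. y $ None = 1})}"

definition A1 :: "(bit ^ ('n::finite option)) set \<Rightarrow> bit ^ 'n ^ 'n" where
  "A1 B = mat 1 + (\<Sum>y\<in>B. sqv (trunc y))"

definition A2 :: "(bit ^ ('n::finite option)) set \<Rightarrow> bit ^ 'n ^ 'n" where
  "A2 B = mat 1 + (\<Sum>y\<in>B. sqv (trunc y)) + sqv (\<Sum>y\<in>B. trunc y)"

text \<open>m = (n+1)/2\<close>
definition FC :: "(bit ^ ('n::finite option)) set \<Rightarrow> (bit ^ 'n ^ 'n) set" where
  "FC C = (if even (CARD('n option) div 2)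
           then A1 ` bases2 C \<union> A2 ` bases C
           else A1 ` bases2 C)"

end

theory Submission
  imports Defs
begin
declare add_bit_eq_xor[simp del] mult_bit_eq_and[simp del]

instance bit :: finite
proof
  have "(UNIV :: bit set) = {0,1}" using bit_not_zero_iff by blast
  then show "finite (UNIV :: bit set)" by (metis finite.emptyI finite_insert)
qed

lemma bit_cases2: "(x::bit) = 0 \<or> x = 1" using bit_not_zero_iff by blast
lemma bit_add_self[simp]: "(x::bit) + x = 0" using bit_cases2[of x] by auto
lemma bit_mult_self[simp]: "(x::bit) * x = x" using bit_cases2[of x] by auto
lemma bit_uminus[simp]: "- (x::bit) = x" using bit_cases2[of x] by auto

lemma sum_option: "(\<Sum>i\<in>(UNIV::'n::finite option set). g i) = g None + (\<Sum>i\<in>UNIV. g (Some i))"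
  by (simp add: UNIV_option_conv sum.reindex)

lemma dotp_comm: "dotp x y = dotp y x" unfolding dotp_def by (simp add: mult.commute)
lemma dotp_add_left: "dotp (x + y) z = dotp x z + dotp y z"
  unfolding dotp_def by (simp add: distrib_right sum.distrib)
lemma dotp_add_right: "dotp z (x + y) = dotp z x + dotp z y"
  unfolding dotp_def by (simp add: distrib_left sum.distrib)
lemma dotp_scale_left: "dotp (c *s x) z = c * dotp x z"
  unfolding dotp_def by (simp add: sum_distrib_left mult.assoc)
lemma dotp_scale_right: "dotp z (c *s x) = c * dotp z x"
  unfolding dotp_def by (simp add: sum_distrib_left mult.left_commute)
lemma dotp_opt: "dotp (x :: bit ^ ('n::finite option)) y = x $ None * y $ None + dotp (trunc x) (trunc y)"
  unfolding dotp_def trunc_def by (simp add: sum_option)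

lemma ext1_None: "(ext1 P *v y) $ None = y $ None"
  unfolding ext1_def matrix_vector_mult_def by (simp add: sum_option)
lemma ext1_trunc: "trunc (ext1 P *v y) = P *v trunc y"
  unfolding ext1_def matrix_vector_mult_def trunc_def by (simp add: sum_option vec_eq_iff)
lemma vec_opt_eq: "u $ None = v $ None \<Longrightarrow> trunc u = trunc v \<Longrightarrow> (u :: bit ^ ('n::finite option)) = v"
  unfolding trunc_def vec_eq_iff by (metis not_None_eq vec_lambda_beta)
lemma ext1_comp: "ext1 A *v (ext1 B *v y) = ext1 (A ** B) *v y"
  apply (rule vec_opt_eq)
   apply (simp only: ext1_None)
  apply (simp only: ext1_trunc)
  apply (simp only: matrix_vector_mul_assoc)
  done
lemma ext1_id: "ext1 (mat 1) *v y = y"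
  by (rule vec_opt_eq) (simp_all add: ext1_None ext1_trunc)

lemma sqv_vec: "sqv a *v x = dotp x a *s a"
  unfolding sqv_def matrix_vector_mult_def dotp_def by (simp add: vec_eq_iff sum_distrib_left mult_ac)
lemma tvm_vec: "(mat 1 + sqv a) *v x = x + dotp x a *s a"
  by (simp add: matrix_vector_mult_add_rdistrib sqv_vec)
lemma tvm_transpose: "transpose (mat 1 + sqv a) = mat 1 + sqv a"
  unfolding transpose_def sqv_def mat_def by (simp add: vec_eq_iff mult.commute)
lemma tv_tv: "dotp a a = 0 \<Longrightarrow> (x + dotp x a *s a) + dotp (x + dotp x a *s a) a *s a = x"
  by (simp add: dotp_add_left dotp_scale_left vec_eq_iff add.assoc)
lemma tv_dotp: assumes "dotp a a = 0"
  shows "dotp (u + dotp u a *s a) (v + dotp v a *s a) = dotp u v"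
proof -
  have "dotp (u + dotp u a *s a) (v + dotp v a *s a)
     = dotp u v + (dotp v a * dotp u a + dotp u a * dotp v a) + dotp u a * dotp v a * dotp a a"
    by (simp add: dotp_add_left dotp_add_right dotp_scale_left dotp_scale_right dotp_comm[of a v] algebra_simps)
  also have "\<dots> = dotp u v" using assms by (simp add: mult.commute)
  finally show ?thesis .
qed
lemma tvm_orth: assumes "dotp a a = 0" shows "orthogonal_matrix (mat 1 + sqv a)"
proof -
  have "(mat 1 + sqv a) ** (mat 1 + sqv a) = mat 1"
    unfolding matrix_eq by (simp add: matrix_vector_mul_assoc[symmetric] tvm_vec tv_tv assms)
  then show ?thesis unfolding orthogonal_matrix_def tvm_transpose by simp
qed
lemma orth_mul: fixes A B :: "bit^'n^'n"
  assumes "orthogonal_matrix A" "orthogonal_matrix B" shows "orthogonal_matrix (A ** B)"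
  using assms unfolding orthogonal_matrix_def matrix_transpose_mul
  by (metis matrix_mul_assoc matrix_mul_lid)

lemma sd_mem: "self_dual C \<Longrightarrow> x \<in> C \<longleftrightarrow> (\<forall>y\<in>C. dotp x y = 0)"
  unfolding self_dual_def dual_code_def by blast
lemma sd_self: "self_dual C \<Longrightarrow> x \<in> C \<Longrightarrow> dotp x x = 0"
  using sd_mem by blast
lemma sd_add: assumes "self_dual C" "x \<in> C" "y \<in> C" shows "x + y \<in> C"
proof -
  have "dotp (x + y) z = 0" if "z \<in> C" for z
  proof -
    have "dotp x z = 0" "dotp y z = 0" using sd_mem[OF assms(1)] assms(2,3) that by blast+
    then show ?thesis by (simp add: dotp_add_left)
  qed
  then show ?thesis using sd_mem[OF assms(1)] by blast
qed
definition ones :: "bit ^ 'k::finite" where "ones = (\<chi> i. 1)"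
lemma dotp_ones: "dotp ones z = dotp z z"
  unfolding dotp_def ones_def by simp
lemma sd_ones: assumes "self_dual C" shows "ones \<in> C"
proof -
  have "dotp ones z = 0" if "z \<in> C" for z
    using sd_self[OF assms that] by (simp add: dotp_ones)
  then show ?thesis using sd_mem[OF assms] by blast
qed
lemma sd_subset: "self_dual C \<Longrightarrow> self_dual D \<Longrightarrow> C \<subseteq> D \<Longrightarrow> C = D"
  using sd_mem[of C] sd_mem[of D] by blast
lemma sd_image:
  assumes "self_dual C" "\<And>x. T (T x) = x" "\<And>u v. dotp (T u) (T v) = dotp u v"
  shows "self_dual (T ` C)"
proof -
  have mem: "z \<in> T ` C \<longleftrightarrow> T z \<in> C" for z
    by (metis assms(2) image_iff)
  have "z \<in> T ` C \<longleftrightarrow> (\<forall>y\<in>T ` C. dotp z y = 0)" for z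
  proof -
    have "z \<in> T ` C \<longleftrightarrow> (\<forall>c\<in>C. dotp (T z) c = 0)" using mem sd_mem[OF assms(1)] by blast
    also have "\<dots> \<longleftrightarrow> (\<forall>c\<in>C. dotp z (T c) = 0)" by (metis assms(2,3))
    finally show ?thesis by blast
  qed
  then show ?thesis unfolding self_dual_def dual_code_def by blast
qed

lemma find_xy:
  fixes C Ct :: "(bit ^ ('n::finite option)) set"
  assumes "self_dual C" "self_dual Ct" "C \<noteq> Ct"
  shows "\<exists>x\<in>C. \<exists>y\<in>Ct. dotp x y = 1 \<and> x $ None = y $ None"
proof -
  have "\<exists>x\<in>C. \<exists>y\<in>Ct. dotp x y = 1"
  proof (rule ccontr)
    assume "\<not> ?thesis"
    then have "C \<subseteq> Ct" using sd_mem[OF assms(2)] bit_not_one_iff by blast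
    then show False using sd_subset assms by blast
  qed
  then obtain x y where xy: "x \<in> C" "y \<in> Ct" "dotp x y = 1" by blast
  show ?thesis
  proof (cases "x $ None = y $ None")
    case True then show ?thesis using xy by blast
  next
    case False
    have "x + ones \<in> C" using sd_add[OF assms(1) xy(1) sd_ones[OF assms(1)]] .
    moreover have "dotp (x + ones) y = 1"
      using xy sd_self[OF assms(2) xy(2)] by (simp add: dotp_add_left dotp_ones)
    moreover have "(x + ones) $ None = y $ None"
      using False bit_cases2[of "x $ None"] bit_cases2[of "y $ None"] by (auto simp: ones_def)
    ultimately show ?thesis using xy by blast
  qed
qed

lemma trunc_add: "trunc (u + v) = trunc u + trunc v"
  unfolding trunc_def by (simp add: vec_eq_iff)
lemma trunc_scale: "trunc (c *s u) = c *s trunc u"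
  unfolding trunc_def by (simp add: vec_eq_iff)

lemma main_step:
  fixes C Ct :: "(bit ^ ('n::finite option)) set"
  assumes sC: "self_dual C" and sCt: "self_dual Ct" and ne: "C \<noteq> Ct"
  shows "\<exists>Q. orthogonal_matrix Q \<and> self_dual ((\<lambda>z. ext1 Q *v z) ` C) \<and>
           card (C \<inter> Ct) < card ((\<lambda>z. ext1 Q *v z) ` C \<inter> Ct)"
proof -
  obtain x y where x: "x \<in> C" and y: "y \<in> Ct" and xy: "dotp x y = 1" and xyN: "x $ None = y $ None"
    using find_xy[OF sC sCt ne] by blast
  define a where "a = x + y"
  define Q where "Q = mat 1 + sqv (trunc a)"
  define T where "T = (\<lambda>z. ext1 Q *v z)"
  have aN: "a $ None = 0" unfolding a_def using xyN by simp
  have xx: "dotp x x = 0" using sd_self[OF sC x] .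
  have yy: "dotp y y = 0" using sd_self[OF sCt y] .
  have yx: "dotp y x = 1" using xy dotp_comm by metis
  have aa: "dotp a a = 0" unfolding a_def
    by (simp add: dotp_add_left dotp_add_right xx yy xy yx)
  have Tz: "T z = z + dotp z a *s a" for z
  proof (rule vec_opt_eq)
    show "T z $ None = (z + dotp z a *s a) $ None" unfolding T_def by (simp add: ext1_None aN)
    have "dotp z a = dotp (trunc z) (trunc a)" using dotp_opt[of z a] aN by simp
    then show "trunc (T z) = trunc (z + dotp z a *s a)"
      unfolding T_def Q_def by (simp add: ext1_trunc tvm_vec trunc_add trunc_scale)
  qed
  have TT: "T (T z) = z" for z unfolding Tz using tv_tv[OF aa] .
  have Tdot: "dotp (T u) (T v) = dotp u v" for u v unfolding Tz using tv_dotp[OF aa] .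
  have sTC: "self_dual (T ` C)" using sd_image[OF sC] TT Tdot by blast
  have orthQ: "orthogonal_matrix Q" unfolding Q_def
    using tvm_orth aa dotp_opt[of a a] aN by simp
  have sub: "C \<inter> Ct \<subseteq> T ` C \<inter> Ct"
  proof
    fix l assume l: "l \<in> C \<inter> Ct"
    have "dotp l x = 0" using sd_mem[OF sC] l x by blast
    moreover have "dotp l y = 0" using sd_mem[OF sCt] l y by blast
    ultimately have "dotp l a = 0" unfolding a_def by (simp add: dotp_add_right)
    then have "T l = l" unfolding Tz by simp
    then have "l = T l" by simp
    then show "l \<in> T ` C \<inter> Ct" using l by blast
  qed
  have "dotp x a = 1" unfolding a_def by (simp add: dotp_add_right xx xy)
  then have "T x = y" unfolding Tz a_def by (simp add: vec_eq_iff add.assoc[symmetric])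
  then have yT: "y \<in> T ` C \<inter> Ct" using x y by blast
  have ynC: "y \<notin> C"
  proof
    assume "y \<in> C"
    then have "dotp y x = 0" using sd_mem[OF sC] x by blast
    then show False using yx by simp
  qed
  have "C \<inter> Ct \<subset> T ` C \<inter> Ct" using sub yT ynC by blast
  then have "card (C \<inter> Ct) < card (T ` C \<inter> Ct)" by (simp add: psubset_card_mono)
  then show ?thesis using orthQ sTC unfolding T_def by blast
qed

lemma main_ex:
  fixes C Ct :: "(bit ^ ('n::finite option)) set"
  assumes "self_dual C" "self_dual Ct"
  shows "\<exists>P. orthogonal_matrix P \<and> Ct = (\<lambda>y. ext1 P *v y) ` C"
proof -
  have "\<forall>C. self_dual C \<longrightarrow> card Ct - card (C \<inter> Ct) = N \<longrightarrow>
          (\<exists>P. orthogonal_matrix P \<and> Ct = (\<lambda>y. ext1 P *v y) ` C)" for N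
  proof (induction N rule: less_induct)
    case (less N)
    show ?case
    proof (intro allI impI)
      fix C :: "(bit ^ ('n::finite option)) set"
      assume sC: "self_dual C" and N: "card Ct - card (C \<inter> Ct) = N"
      show "\<exists>P. orthogonal_matrix P \<and> Ct = (\<lambda>y. ext1 P *v y) ` C"
      proof (cases "C = Ct")
        case True
        then show ?thesis using orthogonal_matrix_id by (auto simp: ext1_id)
      next
        case False
        then obtain Q where Q: "orthogonal_matrix Q" "self_dual ((\<lambda>z. ext1 Q *v z) ` C)"
          "card (C \<inter> Ct) < card ((\<lambda>z. ext1 Q *v z) ` C \<inter> Ct)"
          using main_step[OF sC assms(2)] by blast
        have "card ((\<lambda>z. ext1 Q *v z) ` C \<inter> Ct) \<le> card Ct" by (simp add: card_mono)
        then have "card Ct - card ((\<lambda>z. ext1 Q *v z) ` C \<inter> Ct) < N" using N Q(3) by linarith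
        then obtain P where P: "orthogonal_matrix P" "Ct = (\<lambda>y. ext1 P *v y) ` ((\<lambda>z. ext1 Q *v z) ` C)"
          using less Q(2) by blast
        have "Ct = (\<lambda>y. ext1 (P ** Q) *v y) ` C" using P(2) by (simp add: image_image ext1_comp)
        then show ?thesis using orth_mul[OF P(1) Q(1)] by blast
      qed
    qed
  qed
  then show ?thesis using assms(1) by blast
qed

lemma dotp_mat: "dotp (A *v u) w = dotp u (transpose A *v w)"
proof -
  have "dotp (A *v u) w = (\<Sum>i\<in>UNIV. \<Sum>j\<in>UNIV. A$i$j * u$j * w$i)"
    unfolding dotp_def matrix_vector_mult_def by (simp add: sum_distrib_right)
  also have "\<dots> = (\<Sum>j\<in>UNIV. \<Sum>i\<in>UNIV. A$i$j * u$j * w$i)" by (rule sum.swap)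
  also have "\<dots> = dotp u (transpose A *v w)"
    unfolding dotp_def matrix_vector_mult_def transpose_def
    by (simp add: sum_distrib_left mult.assoc mult.left_commute)
  finally show ?thesis .
qed

definition cj :: "bit^'n^'n \<Rightarrow> bit^'n^'n \<Rightarrow> bit^'n^'n" where
  "cj P M = P ** M ** transpose P"

lemma cj_vec: "cj P M *v x = P *v (M *v (transpose P *v x))"
  unfolding cj_def by (simp only: matrix_vector_mul_assoc matrix_mul_assoc)
lemma cj_add: "cj P (A + B) = cj P A + cj P B"
  unfolding matrix_eq by (simp add: cj_vec matrix_vector_mult_add_rdistrib matrix_vector_right_distrib)
lemma cj_zero: "cj P 0 = 0"
  unfolding matrix_eq by (simp add: cj_vec)
lemma cj_sum: "finite S \<Longrightarrow> cj P (\<Sum>x\<in>S. M x) = (\<Sum>x\<in>S. cj P (M x))"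
  by (induction S rule: finite_induct) (simp_all add: cj_zero cj_add)
lemma cj_id: "orthogonal_matrix P \<Longrightarrow> cj P (mat 1) = mat 1"
  unfolding cj_def orthogonal_matrix_def by simp
lemma sqv_conj: "sqv (P *v u) = cj P (sqv u)"
proof -
  have "dotp (transpose P *v x) u = dotp x (P *v u)" for x
    using dotp_mat[of "transpose P" x u] by (simp only: transpose_transpose)
  then show ?thesis unfolding matrix_eq cj_vec sqv_vec by (simp add: vector_scalar_commute)
qed
lemma mv_sum: "finite S \<Longrightarrow> P *v (\<Sum>x\<in>S. v x) = (\<Sum>x\<in>S. P *v v x)"
  by (induction S rule: finite_induct) (simp_all add: matrix_vector_right_distrib)

lemma orth_inv1: "orthogonal_matrix P \<Longrightarrow> ext1 (transpose P) *v (ext1 P *v y) = y"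
  unfolding orthogonal_matrix_def by (simp add: ext1_comp ext1_id)
lemma orth_inv2: "orthogonal_matrix P \<Longrightarrow> ext1 P *v (ext1 (transpose P) *v y) = y"
  unfolding orthogonal_matrix_def by (simp add: ext1_comp ext1_id)
lemma orth_inj: "orthogonal_matrix P \<Longrightarrow> inj (\<lambda>y. ext1 P *v y)"
  by (metis injI orth_inv1)

lemma A1_conj: assumes "orthogonal_matrix P"
  shows "cj P (A1 B) = A1 ((\<lambda>y. ext1 P *v y) ` B)"
proof -
  have inj: "inj_on (\<lambda>y. ext1 P *v y) B" using orth_inj[OF assms] by (simp add: inj_on_def inj_def)
  have "A1 ((\<lambda>y. ext1 P *v y) ` B) = mat 1 + (\<Sum>y\<in>B. sqv (P *v trunc y))"
    unfolding A1_def by (simp add: sum.reindex[OF inj] ext1_trunc)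
  also have "\<dots> = cj P (A1 B)"
    unfolding A1_def by (simp add: cj_add cj_sum cj_id[OF assms] sqv_conj)
  finally show ?thesis by simp
qed

lemma A2_conj: assumes "orthogonal_matrix P"
  shows "cj P (A2 B) = A2 ((\<lambda>y. ext1 P *v y) ` B)"
proof -
  have inj: "inj_on (\<lambda>y. ext1 P *v y) B" using orth_inj[OF assms] by (simp add: inj_on_def inj_def)
  have "A2 ((\<lambda>y. ext1 P *v y) ` B) = mat 1 + (\<Sum>y\<in>B. sqv (P *v trunc y)) + sqv (P *v (\<Sum>y\<in>B. trunc y))"
    unfolding A2_def by (simp add: sum.reindex[OF inj] ext1_trunc mv_sum)
  also have "\<dots> = cj P (A2 B)"
    unfolding A2_def by (simp add: cj_add cj_sum cj_id[OF assms] sqv_conj)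
  finally show ?thesis by simp
qed

lemma transfer_bases:
  fixes C Ct :: "(bit ^ ('n::finite option)) set"
  assumes P: "orthogonal_matrix P" and Ct: "Ct = (\<lambda>y. ext1 P *v y) ` C" and B: "B \<in> bases C"
  shows "(\<lambda>y. ext1 P *v y) ` B \<in> bases Ct \<and> (B \<in> bases2 C \<longleftrightarrow> (\<lambda>y. ext1 P *v y) ` B \<in> bases2 Ct)"
proof -
  have inj: "inj ((*v) (ext1 P))" using orth_inj[OF P] by simp
  have Bt: "(\<lambda>y. ext1 P *v y) ` B \<in> bases Ct"
    using B unfolding bases_def Ct
    by (auto simp: vec.independent_inj_image[OF _ inj] vec.span_image)
  have "{z \<in> (\<lambda>y. ext1 P *v y) ` B. z $ None = 1} = (\<lambda>y. ext1 P *v y) ` {y \<in> B. y $ None = 1}"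
    by (auto simp: ext1_None)
  then have "card {z \<in> (\<lambda>y. ext1 P *v y) ` B. z $ None = 1} = card {y \<in> B. y $ None = 1}"
    using inj by (simp add: card_image inj_on_subset)
  then show ?thesis using Bt B unfolding bases2_def by auto
qed

theorem theorem8p10:
  fixes C Ct :: "(bit ^ ('n::finite option)) set"
  assumes "odd CARD('n)" and "CARD('n) \<ge> 3"
    and "self_dual C" and "self_dual Ct"
  shows "\<exists>P :: bit ^ 'n ^ 'n. orthogonal_matrix P \<and>
           Ct = (\<lambda>y. ext1 P *v y) ` C \<and>
           (\<forall>B \<in> bases C.
              let Bt = (\<lambda>y. ext1 P *v y) ` B in
              Bt \<in> bases Ct \<and>
              (B \<in> bases2 C \<longleftrightarrow> Bt \<in> bases2 Ct) \<and>
              (A1 B \<in> FC C \<longrightarrow> P ** A1 B ** transpose P = A1 Bt \<and> A1 Bt \<in> FC Ct) \<and>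
              (A2 B \<in> FC C \<longrightarrow> P ** A2 B ** transpose P = A2 Bt \<and> A2 Bt \<in> FC Ct)) \<and>
           (\<lambda>A. P ** A ** transpose P) ` FC C = FC Ct"
proof -
  obtain P :: "bit^'n^'n" where P: "orthogonal_matrix P" and Ct: "Ct = (\<lambda>y. ext1 P *v y) ` C"
    using main_ex[OF assms(3,4)] by blast
  have Pt: "orthogonal_matrix (transpose P)" using P by simp
  have C: "C = (\<lambda>y. ext1 (transpose P) *v y) ` Ct"
    unfolding Ct image_image using orth_inv1[OF P] by simp
  have fg: "(\<lambda>y. ext1 P *v y) ` ((\<lambda>y. ext1 (transpose P) *v y) ` Bt) = Bt" for Bt
    unfolding image_image using orth_inv2[OF P] by simp
  have cjeq: "(\<lambda>A. P ** A ** transpose P) = cj P" by (simp add: cj_def fun_eq_iff)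
  have b2b: "bases2 C \<subseteq> bases C" "bases2 Ct \<subseteq> bases Ct" unfolding bases2_def by auto
  have I1: "cj P ` (A1 ` bases2 C) = A1 ` bases2 Ct"
  proof
    show "cj P ` (A1 ` bases2 C) \<subseteq> A1 ` bases2 Ct"
    proof
      fix M assume "M \<in> cj P ` (A1 ` bases2 C)"
      then obtain B where B: "B \<in> bases2 C" and M: "M = cj P (A1 B)" by blast
      have "(\<lambda>y. ext1 P *v y) ` B \<in> bases2 Ct" using transfer_bases[OF P Ct] B b2b by blast
      then show "M \<in> A1 ` bases2 Ct" unfolding M A1_conj[OF P] by blast
    qed
  next
    show "A1 ` bases2 Ct \<subseteq> cj P ` (A1 ` bases2 C)"
    proof
      fix M assume "M \<in> A1 ` bases2 Ct"
      then obtain Bt where Bt: "Bt \<in> bases2 Ct" and M: "M = A1 Bt" by blast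
      have B: "(\<lambda>y. ext1 (transpose P) *v y) ` Bt \<in> bases2 C" using transfer_bases[OF Pt C] Bt b2b by blast
      have "M = cj P (A1 ((\<lambda>y. ext1 (transpose P) *v y) ` Bt))" unfolding M A1_conj[OF P] fg ..
      then show "M \<in> cj P ` (A1 ` bases2 C)" using B by blast
    qed
  qed
  have I2: "cj P ` (A2 ` bases C) = A2 ` bases Ct"
  proof
    show "cj P ` (A2 ` bases C) \<subseteq> A2 ` bases Ct"
    proof
      fix M assume "M \<in> cj P ` (A2 ` bases C)"
      then obtain B where B: "B \<in> bases C" and M: "M = cj P (A2 B)" by blast
      have "(\<lambda>y. ext1 P *v y) ` B \<in> bases Ct" using transfer_bases[OF P Ct] B by blast
      then show "M \<in> A2 ` bases Ct" unfolding M A2_conj[OF P] by blast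
    qed
  next
    show "A2 ` bases Ct \<subseteq> cj P ` (A2 ` bases C)"
    proof
      fix M assume "M \<in> A2 ` bases Ct"
      then obtain Bt where Bt: "Bt \<in> bases Ct" and M: "M = A2 Bt" by blast
      have B: "(\<lambda>y. ext1 (transpose P) *v y) ` Bt \<in> bases C" using transfer_bases[OF Pt C] Bt by blast
      have "M = cj P (A2 ((\<lambda>y. ext1 (transpose P) *v y) ` Bt))" unfolding M A2_conj[OF P] fg ..
      then show "M \<in> cj P ` (A2 ` bases C)" using B by blast
    qed
  qed
  have iv: "cj P ` FC C = FC Ct"
    unfolding FC_def using I1 I2 by (simp add: image_Un)
  have main: "let Bt = (\<lambda>y. ext1 P *v y) ` B in
              Bt \<in> bases Ct \<and>
              (B \<in> bases2 C \<longleftrightarrow> Bt \<in> bases2 Ct) \<and>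
              (A1 B \<in> FC C \<longrightarrow> P ** A1 B ** transpose P = A1 Bt \<and> A1 Bt \<in> FC Ct) \<and>
              (A2 B \<in> FC C \<longrightarrow> P ** A2 B ** transpose P = A2 Bt \<and> A2 Bt \<in> FC Ct)"
    if B: "B \<in> bases C" for B
  proof -
    have e1: "P ** A1 B ** transpose P = A1 ((\<lambda>y. ext1 P *v y) ` B)"
      using A1_conj[OF P] unfolding cj_def .
    have e2: "P ** A2 B ** transpose P = A2 ((\<lambda>y. ext1 P *v y) ` B)"
      using A2_conj[OF P] unfolding cj_def .
    have m1: "A1 ((\<lambda>y. ext1 P *v y) ` B) \<in> FC Ct" if "A1 B \<in> FC C"
    proof -
      have "cj P (A1 B) \<in> cj P ` FC C" by (rule imageI[OF that])
      then show ?thesis unfolding iv A1_conj[OF P] .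
    qed
    have m2: "A2 ((\<lambda>y. ext1 P *v y) ` B) \<in> FC Ct" if "A2 B \<in> FC C"
    proof -
      have "cj P (A2 B) \<in> cj P ` FC C" by (rule imageI[OF that])
      then show ?thesis unfolding iv A2_conj[OF P] .
    qed
    show ?thesis unfolding Let_def using transfer_bases[OF P Ct B] e1 e2 m1 m2 by blast
  qed
  show ?thesis
  proof (intro exI[of _ P] conjI)
    show "orthogonal_matrix P" using P .
    show "Ct = (\<lambda>y. ext1 P *v y) ` C" using Ct .
    show "\<forall>B \<in> bases C.
              let Bt = (\<lambda>y. ext1 P *v y) ` B in
              Bt \<in> bases Ct \<and>
              (B \<in> bases2 C \<longleftrightarrow> Bt \<in> bases2 Ct) \<and>
              (A1 B \<in> FC C \<longrightarrow> P ** A1 B ** transpose P = A1 Bt \<and> A1 Bt \<in> FC Ct) \<and>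
              (A2 B \<in> FC C \<longrightarrow> P ** A2 B ** transpose P = A2 Bt \<and> A2 Bt \<in> FC Ct)"
      using main by blast
    show "(\<lambda>A. P ** A ** transpose P) ` FC C = FC Ct" unfolding cjeq using iv .
  qed
qed

end
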